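(* For every uncountable set $\Gamma$, the Banach space $\ell_1(\Gamma)$ does not contain any overcomplete set.
   Context: A subset $S$ of a Banach space $X$ with $|S| = \operatorname{dens} X$ (density character) is called overcomplete if every subset $\Lambda \subseteq S$ with $|\Lambda| = |S|$ is linearly dense in $X$. *)

theory Defs
  imports "HOL-Analysis.Analysis"
begin

definition l1_space :: "'a set \<Rightarrow> ('a \<Rightarrow> real) set" where
  "l1_space \<Gamma> = {f. (\<forall>x. x \<notin> \<Gamma> \<longrightarrow> f x = 0) \<and> (\<lambda>x. \<bar>f x\<bar>) summable_on \<Gamma>}"

definition l1_norm :: "'a set \<Rightarrow> ('a \<Rightarrow> real) \<Rightarrow> real" where
  "l1_norm \<Gamma> f = (\<Sum>\<^sub>\<infinity>x\<in>\<Gamma>. \<bar>f x\<bar>)"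

definition l1_dist :: "'a set \<Rightarrow> ('a \<Rightarrow> real) \<Rightarrow> ('a \<Rightarrow> real) \<Rightarrow> real" where
  "l1_dist \<Gamma> f g = l1_norm \<Gamma> (\<lambda>x. f x - g x)"

definition dense_wrt :: "'v set \<Rightarrow> ('v \<Rightarrow> 'v \<Rightarrow> real) \<Rightarrow> 'v set \<Rightarrow> bool" where
  "dense_wrt X d D \<longleftrightarrow> D \<subseteq> X \<and> (\<forall>f\<in>X. \<forall>e>0. \<exists>g\<in>D. d f g < e)"

text \<open>|S| equals the density character of X, i.e. the least cardinality of a dense subset.\<close>
definition card_eq_dens :: "'v set \<Rightarrow> ('v \<Rightarrow> 'v \<Rightarrow> real) \<Rightarrow> 'w set \<Rightarrow> bool" where
  "card_eq_dens X d S \<longleftrightarrow>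
     (\<exists>D. dense_wrt X d D \<and> (card_of S, card_of D) \<in> ordIso) \<and>
     (\<forall>D. dense_wrt X d D \<longrightarrow> (card_of S, card_of D) \<in> ordLeq)"

definition lin_span :: "('a \<Rightarrow> real) set \<Rightarrow> ('a \<Rightarrow> real) set" where
  "lin_span A = {f. \<exists>F c. finite F \<and> F \<subseteq> A \<and> f = (\<lambda>x. \<Sum>v\<in>F. c v * v x)}"

definition linearly_dense :: "('a \<Rightarrow> real) set \<Rightarrow> (('a \<Rightarrow> real) \<Rightarrow> ('a \<Rightarrow> real) \<Rightarrow> real)
    \<Rightarrow> ('a \<Rightarrow> real) set \<Rightarrow> bool" where
  "linearly_dense X d A \<longleftrightarrow> dense_wrt X d (lin_span A)"

definition overcomplete :: "('a \<Rightarrow> real) set \<Rightarrow> (('a \<Rightarrow> real) \<Rightarrow> ('a \<Rightarrow> real) \<Rightarrow> real)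
    \<Rightarrow> ('a \<Rightarrow> real) set \<Rightarrow> bool" where
  "overcomplete X d S \<longleftrightarrow> S \<subseteq> X \<and> card_eq_dens X d S \<and>
     (\<forall>\<Lambda>. \<Lambda> \<subseteq> S \<and> (card_of \<Lambda>, card_of S) \<in> ordIso \<longrightarrow> linearly_dense X d \<Lambda>)"

end

theory Submission
  imports Defs
begin

unbundle cardinal_syntax

definition mass :: "'a set \<Rightarrow> ('a \<Rightarrow> real) \<Rightarrow> real" where
  "mass A g = (\<Sum>\<^sub>\<infinity>x\<in>A. \<bar>g x\<bar>)"

lemma l1_summable_UNIV:
  assumes "g \<in> l1_space \<Gamma>"
  shows "(\<lambda>x. \<bar>g x\<bar>) summable_on UNIV"
proof -
  have "(\<lambda>x. \<bar>g x\<bar>) summable_on \<Gamma>" using assms by (simp add: l1_space_def)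
  moreover have "(\<lambda>x. \<bar>g x\<bar>) summable_on \<Gamma> \<longleftrightarrow> (\<lambda>x. \<bar>g x\<bar>) summable_on UNIV"
    by (rule summable_on_cong_neutral) (use assms in \<open>auto simp: l1_space_def\<close>)
  ultimately show ?thesis by simp
qed

lemma l1_summable:
  assumes "g \<in> l1_space \<Gamma>"
  shows "(\<lambda>x. \<bar>g x\<bar>) summable_on A"
  using summable_on_subset_banach[OF l1_summable_UNIV[OF assms]] by blast

lemma mass_nonneg: "0 \<le> mass A g"
  unfolding mass_def by (rule infsum_nonneg) simp

lemma mass_mono:
  assumes "g \<in> l1_space \<Gamma>" "A \<subseteq> B"
  shows "mass A g \<le> mass B g"
  unfolding mass_def
  by (rule infsum_mono_neutral) (use assms l1_summable in auto)

lemma mass_Un: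
  assumes "g \<in> l1_space \<Gamma>" "A \<inter> B = {}"
  shows "mass (A \<union> B) g = mass A g + mass B g"
  unfolding mass_def by (rule infsum_Un_disjoint) (use assms l1_summable in auto)

lemma mass_point:
  assumes "g \<in> l1_space \<Gamma>" "x \<in> A"
  shows "\<bar>g x\<bar> \<le> mass A g"
proof -
  have "mass {x} g = \<bar>g x\<bar>" by (simp add: mass_def)
  moreover have "mass {x} g \<le> mass A g" using assms by (intro mass_mono) auto
  ultimately show ?thesis by simp
qed

lemma mass_supp:
  "mass A g = mass (A \<inter> {x. g x \<noteq> 0}) g"
  unfolding mass_def by (rule infsum_cong_neutral) auto

lemma mass_UN:
  assumes "g \<in> l1_space \<Gamma>" "finite F"
    "\<And>i j. i \<in> F \<Longrightarrow> j \<in> F \<Longrightarrow> i \<noteq> j \<Longrightarrow> B i \<inter> B j = {}"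
  shows "mass (\<Union>i\<in>F. B i) g = (\<Sum>i\<in>F. mass (B i) g)"
  unfolding mass_def
  by (rule sum_infsum[symmetric]) (use assms l1_summable in auto)

lemma l1_norm_mass:
  assumes "g \<in> l1_space \<Gamma>"
  shows "l1_norm \<Gamma> g = mass UNIV g"
  unfolding l1_norm_def mass_def
  by (rule infsum_cong_neutral) (use assms in \<open>auto simp: l1_space_def\<close>)

lemma supp_countable:
  assumes "g \<in> l1_space \<Gamma>"
  shows "countable {x. g x \<noteq> 0}"
proof -
  have "(\<lambda>x. \<bar>g x\<bar>) summable_on UNIV" by (rule l1_summable_UNIV[OF assms])
  then have "g summable_on UNIV"
    by (subst summable_on_iff_abs_summable_on_real) simp
  then have "countable {x\<in>UNIV. g x \<noteq> 0}" by (rule summable_countable_real)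
  then show ?thesis by simp
qed

lemma supp_sub:
  assumes "g \<in> l1_space \<Gamma>"
  shows "{x. g x \<noteq> 0} \<subseteq> \<Gamma>"
  using assms by (auto simp: l1_space_def)

lemma l1_space_finsum:
  assumes "finite F" "F \<subseteq> l1_space \<Gamma>"
  shows "(\<lambda>x. \<Sum>v\<in>F. c v * v x) \<in> l1_space \<Gamma>"
  using assms
proof (induction F rule: finite_induct)
  case empty
  then show ?case by (simp add: l1_space_def)
next
  case (insert w F)
  have hF: "(\<lambda>x. \<Sum>v\<in>F. c v * v x) \<in> l1_space \<Gamma>" using insert by auto
  have w: "w \<in> l1_space \<Gamma>" using insert by auto
  let ?h = "\<lambda>x. \<Sum>v\<in>insert w F. c v * v x"
  have eq: "?h = (\<lambda>x. c w * w x + (\<Sum>v\<in>F. c v * v x))"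
    using insert by (auto simp: sum.insert)
  have s1: "(\<lambda>x. \<bar>c w\<bar> * \<bar>w x\<bar> + \<bar>\<Sum>v\<in>F. c v * v x\<bar>) summable_on \<Gamma>"
    by (intro summable_on_add summable_on_cmult_right l1_summable[OF w] l1_summable[OF hF])
  have "(\<lambda>x. \<bar>?h x\<bar>) summable_on \<Gamma>"
  proof (rule summable_on_comparison_test[OF s1])
    fix x
    have "\<bar>?h x\<bar> = \<bar>c w * w x + (\<Sum>v\<in>F. c v * v x)\<bar>" using eq by metis
    also have "\<dots> \<le> \<bar>c w * w x\<bar> + \<bar>\<Sum>v\<in>F. c v * v x\<bar>" by (rule abs_triangle_ineq)
    finally show "\<bar>?h x\<bar> \<le> \<bar>c w\<bar> * \<bar>w x\<bar> + \<bar>\<Sum>v\<in>F. c v * v x\<bar>" by (simp add: abs_mult)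
  qed simp
  moreover have "\<forall>x. x \<notin> \<Gamma> \<longrightarrow> ?h x = 0"
    using insert by (auto simp: l1_space_def)
  ultimately show ?case by (simp add: l1_space_def)
qed


lemma finsum_summable_infsum:
  fixes a :: "'b \<Rightarrow> 'a \<Rightarrow> real"
  assumes "finite G" "\<And>g. g \<in> G \<Longrightarrow> a g summable_on A"
  shows "(\<lambda>x. \<Sum>g\<in>G. a g x) summable_on A \<and> infsum (\<lambda>x. \<Sum>g\<in>G. a g x) A = (\<Sum>g\<in>G. infsum (a g) A)"
  using assms
proof (induction G rule: finite_induct)
  case empty
  then show ?case by simp
next
  case (insert w G)
  then have IH: "(\<lambda>x. \<Sum>g\<in>G. a g x) summable_on A"
     "infsum (\<lambda>x. \<Sum>g\<in>G. a g x) A = (\<Sum>g\<in>G. infsum (a g) A)" by auto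
  have w: "a w summable_on A" using insert by auto
  have eq: "(\<lambda>x. \<Sum>g\<in>insert w G. a g x) = (\<lambda>x. a w x + (\<Sum>g\<in>G. a g x))"
    using insert by simp
  show ?case
    unfolding eq using insert IH w
    by (simp add: summable_on_add infsum_add)
qed

lemma l1_diff:
  assumes "f \<in> l1_space \<Gamma>" "g \<in> l1_space \<Gamma>"
  shows "(\<lambda>x. f x - g x) \<in> l1_space \<Gamma>"
proof -
  have s1: "(\<lambda>x. \<bar>f x\<bar> + \<bar>g x\<bar>) summable_on \<Gamma>"
    by (intro summable_on_add l1_summable[OF assms(1)] l1_summable[OF assms(2)])
  have "(\<lambda>x. \<bar>f x - g x\<bar>) summable_on \<Gamma>"
    by (rule summable_on_comparison_test[OF s1]) auto
  then show ?thesis using assms by (auto simp: l1_space_def)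
qed

lemma delta_l1:
  assumes "\<gamma>0 \<in> \<Gamma>"
  shows "(\<lambda>x. if x = \<gamma>0 then 1 else 0 :: real) \<in> l1_space \<Gamma>"
proof -
  have "(\<lambda>x. \<bar>if x = \<gamma>0 then 1 else 0 :: real\<bar>) summable_on {\<gamma>0}" by simp
  moreover have "(\<lambda>x. \<bar>if x = \<gamma>0 then 1 else 0 :: real\<bar>) summable_on {\<gamma>0} \<longleftrightarrow>
     (\<lambda>x. \<bar>if x = \<gamma>0 then 1 else 0 :: real\<bar>) summable_on \<Gamma>"
    by (rule summable_on_cong_neutral) (use assms in auto)
  ultimately show ?thesis using assms by (auto simp: l1_space_def)
qed

lemma mass_comb_lower:
  assumes sub: "F \<subseteq> l1_space \<Gamma>" and fin: "finite F" and f: "f \<in> F"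
  shows "\<bar>c f\<bar> * mass A f - (\<Sum>g\<in>F-{f}. \<bar>c g\<bar> * mass A g) \<le> mass A (\<lambda>x. \<Sum>v\<in>F. c v * v x)"
proof -
  let ?h = "\<lambda>x. \<Sum>v\<in>F. c v * v x"
  have hl1: "?h \<in> l1_space \<Gamma>" by (rule l1_space_finsum[OF fin sub])
  have sF: "\<And>g. g \<in> F - {f} \<Longrightarrow> (\<lambda>x. \<bar>c g\<bar> * \<bar>g x\<bar>) summable_on A"
    using sub by (auto intro!: summable_on_cmult_right l1_summable)
  from finsum_summable_infsum[of "F - {f}" "\<lambda>g x. \<bar>c g\<bar> * \<bar>g x\<bar>" A, OF _ sF]
  have fs: "(\<lambda>x. \<Sum>g\<in>F-{f}. \<bar>c g\<bar> * \<bar>g x\<bar>) summable_on A"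
       "infsum (\<lambda>x. \<Sum>g\<in>F-{f}. \<bar>c g\<bar> * \<bar>g x\<bar>) A = (\<Sum>g\<in>F-{f}. infsum (\<lambda>x. \<bar>c g\<bar> * \<bar>g x\<bar>) A)"
    using fin by auto
  have pt: "\<bar>c f\<bar> * \<bar>f x\<bar> \<le> \<bar>?h x\<bar> + (\<Sum>g\<in>F-{f}. \<bar>c g\<bar> * \<bar>g x\<bar>)" for x
  proof -
    have "?h x = c f * f x + (\<Sum>g\<in>F-{f}. c g * g x)"
      using fin f by (simp add: sum.remove)
    then have "\<bar>c f * f x\<bar> \<le> \<bar>?h x\<bar> + \<bar>\<Sum>g\<in>F-{f}. c g * g x\<bar>" by linarith
    also have "\<bar>\<Sum>g\<in>F-{f}. c g * g x\<bar> \<le> (\<Sum>g\<in>F-{f}. \<bar>c g * g x\<bar>)" by (rule sum_abs)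
    finally show ?thesis by (simp add: abs_mult)
  qed
  have "infsum (\<lambda>x. \<bar>c f\<bar> * \<bar>f x\<bar>) A \<le> infsum (\<lambda>x. \<bar>?h x\<bar> + (\<Sum>g\<in>F-{f}. \<bar>c g\<bar> * \<bar>g x\<bar>)) A"
    by (rule infsum_mono) (use pt fs sub f hl1 in \<open>auto intro!: summable_on_add summable_on_cmult_right l1_summable\<close>)
  also have "\<dots> = mass A ?h + (\<Sum>g\<in>F-{f}. \<bar>c g\<bar> * mass A g)"
    using fs hl1 by (simp add: infsum_add l1_summable mass_def infsum_cmult_right')
  finally show ?thesis by (simp add: mass_def infsum_cmult_right')
qed

lemma sum_swap_offdiag:
  fixes X :: "'b \<Rightarrow> 'b \<Rightarrow> real"
  assumes fin: "finite F"
  shows "(\<Sum>f\<in>F. \<Sum>g\<in>F-{f}. X f g) = (\<Sum>g\<in>F. \<Sum>f\<in>F-{g}. X f g)"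
proof -
  have r1: "(\<Sum>g\<in>F. if g = f then 0 else X f g) = (\<Sum>g\<in>F-{f}. X f g)" if "f \<in> F" for f
    by (subst sum.remove[OF fin that]) (auto intro!: sum.cong)
  have r2: "(\<Sum>f\<in>F. if g = f then 0 else X f g) = (\<Sum>f\<in>F-{g}. X f g)" if "g \<in> F" for g
    by (subst sum.remove[OF fin that]) (auto intro!: sum.cong split: if_splits)
  have "(\<Sum>f\<in>F. \<Sum>g\<in>F-{f}. X f g) = (\<Sum>f\<in>F. \<Sum>g\<in>F. if g = f then 0 else X f g)"
    by (rule sum.cong[OF refl], rule r1[symmetric])
  also have "\<dots> = (\<Sum>g\<in>F. \<Sum>f\<in>F. if g = f then 0 else X f g)" by (rule sum.swap)
  also have "\<dots> = (\<Sum>g\<in>F. \<Sum>f\<in>F-{g}. X f g)"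
    by (rule sum.cong[OF refl], rule r2)
  finally show ?thesis .
qed

lemma obstruction:
  fixes \<Lambda> :: "('a \<Rightarrow> real) set" and B :: "('a \<Rightarrow> real) \<Rightarrow> 'a set"
  assumes sub: "\<Lambda> \<subseteq> l1_space \<Gamma>" and g0: "\<gamma>0 \<in> \<Gamma>" and t: "0 < t" "t \<le> 1"
    and Bsub: "\<And>g. g \<in> \<Lambda> \<Longrightarrow> B g \<subseteq> \<Gamma> - {\<gamma>0}"
    and Bdisj: "\<And>f g. f \<in> \<Lambda> \<Longrightarrow> g \<in> \<Lambda> \<Longrightarrow> f \<noteq> g \<Longrightarrow> B f \<inter> B g = {}"
    and cond: "\<And>g F. g \<in> \<Lambda> \<Longrightarrow> finite F \<Longrightarrow> F \<subseteq> \<Lambda> \<Longrightarrow>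
                  t * \<bar>g \<gamma>0\<bar> + (\<Sum>f\<in>F-{g}. mass (B f) g) \<le> mass (B g) g"
  shows "\<not> linearly_dense (l1_space \<Gamma>) (l1_dist \<Gamma>) \<Lambda>"
proof
  assume ld: "linearly_dense (l1_space \<Gamma>) (l1_dist \<Gamma>) \<Lambda>"
  define e where "e = (\<lambda>x. if x = \<gamma>0 then 1 else 0 :: real)"
  have el1: "e \<in> l1_space \<Gamma>" unfolding e_def by (rule delta_l1[OF g0])
  from ld el1 t obtain h where hs: "h \<in> lin_span \<Lambda>" and hd: "l1_dist \<Gamma> e h < t"
    unfolding linearly_dense_def dense_wrt_def by blast
  from hs obtain F c where F: "finite F" "F \<subseteq> \<Lambda>" and h: "h = (\<lambda>x. \<Sum>v\<in>F. c v * v x)"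
    unfolding lin_span_def by blast
  have Fl1: "F \<subseteq> l1_space \<Gamma>" using F sub by auto
  have hl1: "h \<in> l1_space \<Gamma>" unfolding h by (rule l1_space_finsum[OF F(1) Fl1])
  define D where "D = (\<lambda>x. e x - h x)"
  have Dl1: "D \<in> l1_space \<Gamma>" unfolding D_def by (rule l1_diff[OF el1 hl1])
  have dist: "l1_dist \<Gamma> e h = mass UNIV D"
    unfolding l1_dist_def D_def[symmetric] by (rule l1_norm_mass[OF Dl1])
  have disjB: "\<And>i j. i \<in> F \<Longrightarrow> j \<in> F \<Longrightarrow> i \<noteq> j \<Longrightarrow> B i \<inter> B j = {}"
    using Bdisj F by auto
  have g0B: "{\<gamma>0} \<inter> (\<Union>f\<in>F. B f) = {}" using Bsub F by auto
  have "mass ({\<gamma>0} \<union> (\<Union>f\<in>F. B f)) D \<le> mass UNIV D" by (rule mass_mono[OF Dl1]) auto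
  moreover have "mass ({\<gamma>0} \<union> (\<Union>f\<in>F. B f)) D = mass {\<gamma>0} D + (\<Sum>f\<in>F. mass (B f) D)"
    using mass_Un[OF Dl1 g0B] mass_UN[OF Dl1 F(1) disjB] by simp
  moreover have "mass {\<gamma>0} D = \<bar>1 - h \<gamma>0\<bar>" by (simp add: mass_def D_def e_def)
  moreover have "mass (B f) D = mass (B f) h" if "f \<in> F" for f
  proof -
    have "\<gamma>0 \<notin> B f" using Bsub F that by auto
    then show ?thesis unfolding mass_def D_def e_def
      by (intro infsum_cong) auto
  qed
  ultimately have M1: "\<bar>1 - h \<gamma>0\<bar> + (\<Sum>f\<in>F. mass (B f) h) \<le> mass UNIV D" by simp
  have low: "\<bar>c f\<bar> * mass (B f) f - (\<Sum>g\<in>F-{f}. \<bar>c g\<bar> * mass (B f) g) \<le> mass (B f) h"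
    if "f \<in> F" for f
    unfolding h by (rule mass_comb_lower[OF Fl1 F(1) that])
  have "(\<Sum>f\<in>F. \<bar>c f\<bar> * mass (B f) f) - (\<Sum>f\<in>F. \<Sum>g\<in>F-{f}. \<bar>c g\<bar> * mass (B f) g)
        \<le> (\<Sum>f\<in>F. mass (B f) h)"
    using sum_mono[OF low] by (simp add: sum_subtractf)
  also have "(\<Sum>f\<in>F. \<Sum>g\<in>F-{f}. \<bar>c g\<bar> * mass (B f) g) = (\<Sum>g\<in>F. \<Sum>f\<in>F-{g}. \<bar>c g\<bar> * mass (B f) g)"
    by (rule sum_swap_offdiag[OF F(1)])
  also have "\<dots> = (\<Sum>g\<in>F. \<bar>c g\<bar> * (\<Sum>f\<in>F-{g}. mass (B f) g))"
    by (simp add: sum_distrib_left)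
  finally have S1: "(\<Sum>g\<in>F. \<bar>c g\<bar> * (mass (B g) g - (\<Sum>f\<in>F-{g}. mass (B f) g))) \<le> (\<Sum>f\<in>F. mass (B f) h)"
    by (simp add: right_diff_distrib sum_subtractf)
  have "(\<Sum>g\<in>F. \<bar>c g\<bar> * (t * \<bar>g \<gamma>0\<bar>)) \<le> (\<Sum>g\<in>F. \<bar>c g\<bar> * (mass (B g) g - (\<Sum>f\<in>F-{g}. mass (B f) g)))"
  proof (rule sum_mono)
    fix g assume "g \<in> F"
    then have "t * \<bar>g \<gamma>0\<bar> \<le> mass (B g) g - (\<Sum>f\<in>F-{g}. mass (B f) g)"
      using cond[of g F] F by auto
    then show "\<bar>c g\<bar> * (t * \<bar>g \<gamma>0\<bar>) \<le> \<bar>c g\<bar> * (mass (B g) g - (\<Sum>f\<in>F-{g}. mass (B f) g))"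
      by (simp add: mult_left_mono)
  qed
  moreover have "t * \<bar>h \<gamma>0\<bar> \<le> (\<Sum>g\<in>F. \<bar>c g\<bar> * (t * \<bar>g \<gamma>0\<bar>))"
  proof -
    have "\<bar>h \<gamma>0\<bar> \<le> (\<Sum>g\<in>F. \<bar>c g * g \<gamma>0\<bar>)" unfolding h by (rule sum_abs)
    then have "t * \<bar>h \<gamma>0\<bar> \<le> t * (\<Sum>g\<in>F. \<bar>c g\<bar> * \<bar>g \<gamma>0\<bar>)"
      using t by (simp add: abs_mult mult_left_mono)
    then show ?thesis by (simp add: sum_distrib_left mult.left_commute)
  qed
  ultimately have "t * \<bar>h \<gamma>0\<bar> \<le> (\<Sum>f\<in>F. mass (B f) h)" using S1 by linarith
  with M1 have "\<bar>1 - h \<gamma>0\<bar> + t * \<bar>h \<gamma>0\<bar> \<le> l1_dist \<Gamma> e h" using dist by linarith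
  moreover have "t \<le> \<bar>1 - h \<gamma>0\<bar> + t * \<bar>h \<gamma>0\<bar>"
  proof -
    have "t * (\<bar>1 - h \<gamma>0\<bar> + \<bar>h \<gamma>0\<bar>) \<le> \<bar>1 - h \<gamma>0\<bar> + t * \<bar>h \<gamma>0\<bar>"
      using t by (simp add: distrib_left mult_left_le_one_le)
    moreover have "t * 1 \<le> t * (\<bar>1 - h \<gamma>0\<bar> + \<bar>h \<gamma>0\<bar>)"
      using t by (intro mult_left_mono) auto
    ultimately show ?thesis by simp
  qed
  ultimately show False using hd by linarith
qed


lemma card_le_nat_iff: "|A| \<le>o |UNIV::nat set| \<longleftrightarrow> countable A"
  unfolding card_of_ordLeq[symmetric] countable_def by auto

lemma fin_less_inf: "finite A \<Longrightarrow> \<not> finite B \<Longrightarrow> |A| <o |B|"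
  by (rule finite_ordLess_infinite) (auto simp: card_of_Well_order Field_card_of card_of_well_order_on)

lemma card_not_less_iso: "X \<subseteq> S \<Longrightarrow> \<not> |X| <o |S| \<Longrightarrow> |X| =o |S|"
  using card_of_mono1 ordLeq_iff_ordLess_or_ordIso by blast

lemma less_mono: "X \<subseteq> Y \<Longrightarrow> |Y| <o |S| \<Longrightarrow> |X| <o |S|"
  using ordLeq_ordLess_trans[OF card_of_mono1] by blast

lemma uncountable_nat_less: "\<not> countable C \<Longrightarrow> |UNIV::nat set| <o |C|"
  using card_le_nat_iff not_ordLeq_iff_ordLess[OF card_of_Well_order card_of_Well_order] by blast

lemma times_less_aux:
  assumes C: "\<not> finite C" and BA: "|B| \<le>o |A|" and AC: "|A| <o |C|"
  shows "|A \<times> B| <o |C|"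
proof (cases "finite A")
  case True
  then have "finite B" using BA card_of_ordLeq_finite by blast
  then show ?thesis using True C by (intro fin_less_inf) auto
next
  case False
  show ?thesis
  proof (cases "B = {}")
    case True
    then show ?thesis using C by (intro fin_less_inf) auto
  next
    case Bne: False
    have "|A \<times> B| =o |A|" using card_of_Times_infinite[OF False Bne BA] by blast
    then show ?thesis using AC ordIso_ordLess_trans by blast
  qed
qed

lemma times_less:
  assumes C: "\<not> finite C" and AC: "|A| <o |C|" and BC: "|B| <o |C|"
  shows "|A \<times> B| <o |C|"
proof -
  have "|A| \<le>o |B| \<or> |B| \<le>o |A|" by (rule ordLeq_total[OF card_of_Well_order card_of_Well_order])
  then show ?thesis
  proof
    assume "|A| \<le>o |B|"
    then have "|B \<times> A| <o |C|" by (rule times_less_aux[OF C _ BC])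
    moreover have "|A \<times> B| =o |B \<times> A|" by (rule card_of_Times_commute)
    ultimately show ?thesis using ordIso_ordLess_trans by blast
  next
    assume "|B| \<le>o |A|"
    then show ?thesis by (rule times_less_aux[OF C _ AC])
  qed
qed

lemma UN_countable_less:
  assumes C: "\<not> countable C" and I: "|I| <o |C|" and A: "\<And>i. i \<in> I \<Longrightarrow> countable (A i)"
  shows "|\<Union>i\<in>I. A i| <o |C|"
proof -
  have Cinf: "\<not> finite C" using C countable_finite by blast
  have "|\<Union>i\<in>I. A i| \<le>o |SIGMA i:I. A i|" by (rule card_of_UNION_Sigma)
  also have "|SIGMA i:I. A i| \<le>o |SIGMA i:I. (UNIV::nat set)|"
    by (rule card_of_Sigma_mono1) (use A card_le_nat_iff in blast)
  finally have "|\<Union>i\<in>I. A i| \<le>o |I \<times> (UNIV::nat set)|" by simp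
  moreover have "|I \<times> (UNIV::nat set)| <o |C|"
    by (rule times_less[OF Cinf I uncountable_nat_less[OF C]])
  ultimately show ?thesis using ordLeq_ordLess_trans by blast
qed

lemma diff_big:
  assumes S: "\<not> finite S" and X: "X \<subseteq> S" "\<not> |X| <o |S|" and Y: "|Y| <o |S|"
  shows "\<not> |X - Y| <o |S|"
proof
  assume "|X - Y| <o |S|"
  then have "|(X - Y) \<union> Y| <o |S|" using card_of_Un_ordLess_infinite[OF S _ Y] by blast
  moreover have "X \<subseteq> (X - Y) \<union> Y" by blast
  ultimately have "|X| <o |S|" by (rule less_mono[rotated])
  with X show False by blast
qed

lemma ZA:
  assumes sub: "\<Lambda> \<subseteq> l1_space \<Gamma>" and g: "\<gamma> \<in> \<Gamma>" and z: "\<And>f. f \<in> \<Lambda> \<Longrightarrow> f \<gamma> = 0"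
  shows "\<not> linearly_dense (l1_space \<Gamma>) (l1_dist \<Gamma>) \<Lambda>"
  by (rule obstruction[OF sub g, of 1 "\<lambda>_. {}"]) (auto simp: z mass_def)

definition Nset :: "('a \<Rightarrow> real) set \<Rightarrow> 'a set \<Rightarrow> real \<Rightarrow> ('a \<Rightarrow> real) set" where
  "Nset S U r = {g\<in>S. r * mass UNIV g \<le> mass (-U) g}"

definition good :: "('a \<Rightarrow> real) set \<Rightarrow> 'a set \<Rightarrow> real \<Rightarrow> (('a \<Rightarrow> real) \<times> 'a set) set \<Rightarrow> bool" where
  "good S Us \<delta> P \<longleftrightarrow>
     (\<forall>g B. (g,B)\<in>P \<longrightarrow> g \<in> S \<and> B \<subseteq> {x. g x \<noteq> 0} \<and> B \<inter> Us = {} \<and>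
        4 * \<delta> * mass UNIV g \<le> mass B g \<and> mass (\<Union>(snd ` P) - B) g \<le> 2 * \<delta> * mass UNIV g) \<and>
     (\<forall>g B B'. (g,B)\<in>P \<longrightarrow> (g,B')\<in>P \<longrightarrow> B = B') \<and>
     (\<forall>g B g' B'. (g,B)\<in>P \<longrightarrow> (g',B')\<in>P \<longrightarrow> g \<noteq> g' \<longrightarrow> B \<inter> B' = {})"

lemma goodD1:
  assumes "good S Us \<delta> P" "(g,B) \<in> P"
  shows "g \<in> S \<and> B \<subseteq> {x. g x \<noteq> 0} \<and> B \<inter> Us = {} \<and>
        4 * \<delta> * mass UNIV g \<le> mass B g \<and> mass (\<Union>(snd ` P) - B) g \<le> 2 * \<delta> * mass UNIV g"
proof -
  have "\<forall>g B. (g,B)\<in>P \<longrightarrow> g \<in> S \<and> B \<subseteq> {x. g x \<noteq> 0} \<and> B \<inter> Us = {} \<and>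
        4 * \<delta> * mass UNIV g \<le> mass B g \<and> mass (\<Union>(snd ` P) - B) g \<le> 2 * \<delta> * mass UNIV g"
    using assms(1) unfolding good_def by (rule conjunct1)
  from this[rule_format, OF assms(2)] show ?thesis .
qed

lemma goodD2:
  assumes "good S Us \<delta> P" "(g,B) \<in> P" "(g,B') \<in> P"
  shows "B = B'"
proof -
  have "\<forall>g B B'. (g,B)\<in>P \<longrightarrow> (g,B')\<in>P \<longrightarrow> B = B'"
    using assms(1) unfolding good_def by (rule conjunct1[OF conjunct2])
  from this[rule_format, OF assms(2) assms(3)] show ?thesis .
qed

lemma goodD3:
  assumes "good S Us \<delta> P" "(g,B) \<in> P" "(g',B') \<in> P" "g \<noteq> g'"
  shows "B \<inter> B' = {}"
proof -
  have "\<forall>g B g' B'. (g,B)\<in>P \<longrightarrow> (g',B')\<in>P \<longrightarrow> g \<noteq> g' \<longrightarrow> B \<inter> B' = {}"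
    using assms(1) unfolding good_def by (rule conjunct2[OF conjunct2])
  from this[rule_format, OF assms(2) assms(3) assms(4)] show ?thesis .
qed

lemma goodI:
  assumes "\<And>g B. (g,B) \<in> P \<Longrightarrow> g \<in> S \<and> B \<subseteq> {x. g x \<noteq> 0} \<and> B \<inter> Us = {} \<and>
        4 * \<delta> * mass UNIV g \<le> mass B g \<and> mass (\<Union>(snd ` P) - B) g \<le> 2 * \<delta> * mass UNIV g"
    and "\<And>g B B'. (g,B) \<in> P \<Longrightarrow> (g,B') \<in> P \<Longrightarrow> B = B'"
    and "\<And>g B g' B'. (g,B) \<in> P \<Longrightarrow> (g',B') \<in> P \<Longrightarrow> g \<noteq> g' \<Longrightarrow> B \<inter> B' = {}"
  shows "good S Us \<delta> P"
  unfolding good_def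
  apply (rule conjI, (intro allI impI), erule assms(1))
  apply (rule conjI, (intro allI impI), erule (1) assms(2))
  apply ((intro allI impI), erule (2) assms(3))
  done

lemma chain_finite_cover:
  assumes C: "C \<in> chains A" and P: "P \<in> C"
  shows "finite F \<Longrightarrow> F \<subseteq> \<Union>(snd ` \<Union>C) \<Longrightarrow> \<exists>P'\<in>C. P \<subseteq> P' \<and> F \<subseteq> \<Union>(snd ` P')"
proof (induction F rule: finite_induct)
  case empty
  show ?case using P by (intro bexI[of _ P]) auto
next
  case (insert x F)
  have "F \<subseteq> \<Union>(snd ` \<Union>C)" using insert.prems by simp
  from insert.IH[OF this]
  obtain P1 where P1: "P1 \<in> C" "P \<subseteq> P1" "F \<subseteq> \<Union>(snd ` P1)" by (elim bexE conjE)
  have "x \<in> \<Union>(snd ` \<Union>C)" using insert.prems by simp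
  then obtain q P2 where P2: "P2 \<in> C" "q \<in> P2" "x \<in> snd q" by auto
  have "P1 \<subseteq> P2 \<or> P2 \<subseteq> P1" using C P1(1) P2(1) unfolding chains_def chain_subset_def by auto
  then show ?case
  proof
    assume a: "P1 \<subseteq> P2"
    have "\<Union>(snd ` P1) \<subseteq> \<Union>(snd ` P2)" using a by auto
    then show ?thesis using P1 P2 a by (intro bexI[of _ P2]) auto
  next
    assume a: "P2 \<subseteq> P1"
    then show ?thesis using P1 P2 a by (intro bexI[of _ P1]) auto
  qed
qed

lemma good_chain:
  assumes SX: "S \<subseteq> l1_space \<Gamma>" and C: "C \<in> chains {P. good S Us \<delta> P}"
  shows "good S Us \<delta> (\<Union>C)"
proof -
  have CP: "\<And>P. P \<in> C \<Longrightarrow> good S Us \<delta> P" using C by (auto simp: chains_def)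
  have two: "\<exists>P\<in>C. p \<in> P \<and> q \<in> P" if "p \<in> \<Union>C" "q \<in> \<Union>C" for p q
  proof -
    from that obtain P1 P2 where "P1 \<in> C" "P2 \<in> C" "p \<in> P1" "q \<in> P2" by auto
    moreover have "P1 \<subseteq> P2 \<or> P2 \<subseteq> P1" using C \<open>P1 \<in> C\<close> \<open>P2 \<in> C\<close>
      by (auto simp: chains_def chain_subset_def)
    ultimately show ?thesis by blast
  qed
  have A: "g \<in> S \<and> B \<subseteq> {x. g x \<noteq> 0} \<and> B \<inter> Us = {} \<and>
        4 * \<delta> * mass UNIV g \<le> mass B g \<and> mass (\<Union>(snd ` \<Union>C) - B) g \<le> 2 * \<delta> * mass UNIV g"
    if gB: "(g,B) \<in> \<Union>C" for g B
  proof -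
    from gB obtain P where P: "P \<in> C" "(g,B) \<in> P" by auto
    have gP: "good S Us \<delta> P" using CP P(1) by blast
    then have basic: "g \<in> S" "B \<subseteq> {x. g x \<noteq> 0}" "B \<inter> Us = {}" "4 * \<delta> * mass UNIV g \<le> mass B g"
      using goodD1[OF gP P(2)] by auto
    have gl1: "g \<in> l1_space \<Gamma>" using basic(1) SX by (rule subsetD[rotated])
    have "(\<Sum>\<^sub>\<infinity>x\<in>\<Union>(snd ` \<Union>C) - B. \<bar>g x\<bar>) \<le> 2 * \<delta> * mass UNIV g"
    proof (rule infsum_le_finite_sums)
      show "(\<lambda>x. \<bar>g x\<bar>) summable_on (\<Union>(snd ` \<Union>C) - B)" by (rule l1_summable[OF gl1])
      fix F assume F: "finite F" "F \<subseteq> \<Union>(snd ` \<Union>C) - B"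
      have F2: "F \<subseteq> \<Union>(snd ` \<Union>C)" using F(2) by (rule subset_trans) (rule Diff_subset)
      from chain_finite_cover[OF C P(1), OF F(1) F2]
      obtain P' where P': "P' \<in> C" "P \<subseteq> P'" "F \<subseteq> \<Union>(snd ` P')" by (elim bexE conjE)
      have gP': "good S Us \<delta> P'" using CP P'(1) by blast
      have "(g,B) \<in> P'" using P P' by auto
      then have b2: "mass (\<Union>(snd ` P') - B) g \<le> 2 * \<delta> * mass UNIV g" using goodD1[OF gP'] by blast
      have "(\<Sum>x\<in>F. \<bar>g x\<bar>) = mass F g" using F by (simp add: mass_def)
      also have "\<dots> \<le> mass (\<Union>(snd ` P') - B) g" by (rule mass_mono[OF gl1]) (use F P' in auto)
      finally show "(\<Sum>x\<in>F. \<bar>g x\<bar>) \<le> 2 * \<delta> * mass UNIV g" using b2 by linarith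
    qed
    then have "mass (\<Union>(snd ` \<Union>C) - B) g \<le> 2 * \<delta> * mass UNIV g"
      by (simp only: mass_def[of "\<Union>(snd ` \<Union>C) - B"])
    then show ?thesis using basic by auto
  qed
  have B: "B = B'" if h1: "(g,B) \<in> \<Union>C" and h2: "(g',B') \<in> \<Union>C" and h3: "g = g'" for g B g' B'
  proof -
    obtain P where "P \<in> C" "(g,B) \<in> P" "(g',B') \<in> P" using two[OF h1 h2] by auto
    then show ?thesis using goodD2[OF CP[of P]] h3 by blast
  qed
  have D: "B \<inter> B' = {}" if h1: "(g,B) \<in> \<Union>C" and h2: "(g',B') \<in> \<Union>C" and h3: "g \<noteq> g'" for g B g' B'
  proof -
    obtain P where "P \<in> C" "(g,B) \<in> P" "(g',B') \<in> P" using two[OF h1 h2] by auto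
    then show ?thesis using goodD3[OF CP[of P]] h3 by blast
  qed
  show ?thesis
    apply (rule goodI)
      apply (erule A)
     apply (erule (1) B, rule refl)
    apply (erule (2) D)
    done
qed


lemma zorn_part:
  fixes S :: "('a \<Rightarrow> real) set" and \<Gamma> :: "'a set"
  assumes SX: "S \<subseteq> l1_space \<Gamma>" and unc: "\<not> countable S"
    and g0: "\<gamma>0 \<in> \<Gamma>" "\<gamma>0 \<in> Us" and Usl: "|Us| <o |S|" and \<delta>: "0 < \<delta>" "\<delta> \<le> 1"
    and hU: "\<And>U. |U| <o |S| \<Longrightarrow> \<not> |Nset S U (4*\<delta>)| <o |S|"
    and hUs: "|Nset S Us (6*\<delta>)| <o |S|"
  shows "\<exists>\<Lambda>\<subseteq>S. |\<Lambda>| =o |S| \<and> \<not> linearly_dense (l1_space \<Gamma>) (l1_dist \<Gamma>) \<Lambda>"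
proof -
  have Sinf: "\<not> finite S" using unc countable_finite by blast
  let ?A = "{P. good S Us \<delta> P}"
  have "\<forall>C\<in>chains ?A. \<Union>C \<in> ?A" using good_chain[OF SX] by blast
  from Zorn_Lemma[OF this] obtain M where M: "M \<in> ?A" and max: "\<forall>X\<in>?A. M \<subseteq> X \<longrightarrow> X = M"
    by (elim bexE)
  have gM: "good S Us \<delta> M" using M by simp
  define \<Lambda> where "\<Lambda> = fst ` M"
  have \<Lambda>S: "\<Lambda> \<subseteq> S"
  proof
    fix f assume "f \<in> \<Lambda>"
    then obtain B where "(f,B) \<in> M" unfolding \<Lambda>_def by force
    from goodD1[OF gM this] show "f \<in> S" by simp
  qed
  have big: "\<not> |\<Lambda>| <o |S|"
  proof
    assume small: "|\<Lambda>| <o |S|"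
    define U where "U = Us \<union> (\<Union>g\<in>\<Lambda>. {x. g x \<noteq> 0})"
    have Ul: "|U| <o |S|"
    proof -
      have "|\<Union>g\<in>\<Lambda>. {x. g x \<noteq> 0}| <o |S|"
      proof (rule UN_countable_less[OF unc small])
        fix g assume "g \<in> \<Lambda>"
        then have "g \<in> l1_space \<Gamma>" using \<Lambda>S SX by (rule subsetD[OF subset_trans, rotated 2])
        then show "countable {x. g x \<noteq> 0}" by (rule supp_countable)
      qed
      then show ?thesis unfolding U_def using card_of_Un_ordLess_infinite[OF Sinf Usl] by blast
    qed
    define Cand where "Cand = Nset S U (4*\<delta>) - Nset S Us (6*\<delta>)"
    have Cbig: "\<not> |Cand| <o |S|" unfolding Cand_def
      by (rule diff_big[OF Sinf _ hU[OF Ul] hUs]) (auto simp: Nset_def)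
    have "\<exists>g. g \<in> Cand \<and> g \<notin> \<Lambda>"
    proof (rule ccontr)
      assume "\<not> (\<exists>g. g \<in> Cand \<and> g \<notin> \<Lambda>)"
      then have "Cand \<subseteq> \<Lambda>" by auto
      then have "|Cand| <o |S|" using small by (rule less_mono)
      then show False using Cbig by simp
    qed
    then obtain g where gC: "g \<in> Cand" and gnot: "g \<notin> \<Lambda>" by auto
    have gS: "g \<in> S" and g4: "4*\<delta>*mass UNIV g \<le> mass (-U) g" and g6: "\<not> 6*\<delta>*mass UNIV g \<le> mass (-Us) g"
      using gC unfolding Cand_def Nset_def by auto
    have gl1: "g \<in> l1_space \<Gamma>" using gS SX by blast
    have UsU: "Us \<subseteq> U" unfolding U_def by blast
    have split: "mass (-Us) g = mass (U - Us) g + mass (-U) g"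
    proof -
      have e: "-Us = (U - Us) \<union> (-U)" using UsU by blast
      have "(U - Us) \<inter> (-U) = {}" by blast
      from mass_Un[OF gl1 this] show ?thesis unfolding e[symmetric] .
    qed
    have mid: "mass (U - Us) g \<le> 2*\<delta>*mass UNIV g" using split g4 g6 by linarith
    define Bn where "Bn = {x. g x \<noteq> 0} - U"
    have mBn: "mass Bn g = mass (-U) g"
    proof -
      have e1: "Bn \<inter> {x. g x \<noteq> 0} = -U \<inter> {x. g x \<noteq> 0}" unfolding Bn_def by blast
      show ?thesis using mass_supp[of Bn g] mass_supp[of "-U" g] e1 by simp
    qed
    have BnU: "Bn \<inter> U = {}" unfolding Bn_def by blast
    have fL: "f \<in> \<Lambda>" if "(f,B) \<in> M" for f B using that unfolding \<Lambda>_def by force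
    have blocks_in: "\<Union>(snd ` M) \<subseteq> U - Us"
    proof
      fix x assume "x \<in> \<Union>(snd ` M)"
      then obtain f B where fB: "(f,B) \<in> M" "x \<in> B" by auto
      from goodD1[OF gM fB(1)] have "B \<subseteq> {x. f x \<noteq> 0}" "B \<inter> Us = {}" by auto
      moreover have "f \<in> \<Lambda>" using fL fB(1) .
      ultimately show "x \<in> U - Us" using fB(2) unfolding U_def by blast
    qed
    define M' where "M' = insert (g, Bn) M"
    have W': "\<Union>(snd ` M') = \<Union>(snd ` M) \<union> Bn" unfolding M'_def by auto
    have gnM: "(g, B) \<notin> M" for B using gnot fL by blast
    have gM': "good S Us \<delta> M'"
    proof (rule goodI)
      fix f B assume fB: "(f,B) \<in> M'"
      show "f \<in> S \<and> B \<subseteq> {x. f x \<noteq> 0} \<and> B \<inter> Us = {} \<and>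
        4 * \<delta> * mass UNIV f \<le> mass B f \<and> mass (\<Union>(snd ` M') - B) f \<le> 2 * \<delta> * mass UNIV f"
      proof (cases "(f,B) = (g,Bn)")
        case True
        then have fg: "f = g" "B = Bn" by auto
        have "\<Union>(snd ` M') - Bn \<subseteq> U - Us" using W' blocks_in by blast
        then have "mass (\<Union>(snd ` M') - Bn) g \<le> mass (U - Us) g" by (rule mass_mono[OF gl1])
        then have c5: "mass (\<Union>(snd ` M') - Bn) g \<le> 2 * \<delta> * mass UNIV g" using mid by linarith
        have c4: "4 * \<delta> * mass UNIV g \<le> mass Bn g" using mBn g4 by simp
        have c23: "Bn \<subseteq> {x. g x \<noteq> 0}" "Bn \<inter> Us = {}" using UsU unfolding Bn_def by blast+
        show ?thesis unfolding fg using gS c23 c4 c5 by blast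
      next
        case False
        then have fBM: "(f,B) \<in> M" using fB unfolding M'_def by auto
        from goodD1[OF gM fBM] have old: "f \<in> S" "B \<subseteq> {x. f x \<noteq> 0}" "B \<inter> Us = {}"
          "4 * \<delta> * mass UNIV f \<le> mass B f" "mass (\<Union>(snd ` M) - B) f \<le> 2 * \<delta> * mass UNIV f" by auto
        have fl1: "f \<in> l1_space \<Gamma>" using old(1) SX by blast
        have suppf: "{x. f x \<noteq> 0} \<subseteq> U" using fL[OF fBM] unfolding U_def by blast
        have "(\<Union>(snd ` M') - B) \<inter> {x. f x \<noteq> 0} \<subseteq> \<Union>(snd ` M) - B" using W' suppf BnU by blast
        then have "mass ((\<Union>(snd ` M') - B) \<inter> {x. f x \<noteq> 0}) f \<le> mass (\<Union>(snd ` M) - B) f"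
          by (rule mass_mono[OF fl1])
        then have "mass (\<Union>(snd ` M') - B) f \<le> mass (\<Union>(snd ` M) - B) f"
          using mass_supp[of "\<Union>(snd ` M') - B" f] by simp
        then have c5: "mass (\<Union>(snd ` M') - B) f \<le> 2 * \<delta> * mass UNIV f" using old(5) by linarith
        show ?thesis using old(1-4) c5 by blast
      qed
    next
      fix f B B' assume a: "(f,B) \<in> M'" "(f,B') \<in> M'"
      show "B = B'"
      proof (cases "f = g")
        case True
        then have "B = Bn" "B' = Bn" using a gnM unfolding M'_def by auto
        then show ?thesis by simp
      next
        case False
        then have "(f,B) \<in> M" "(f,B') \<in> M" using a unfolding M'_def by auto
        then show ?thesis by (rule goodD2[OF gM])
      qed
    next
      fix f B f' B' assume a: "(f,B) \<in> M'" "(f',B') \<in> M'" "f \<noteq> f'"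
      show "B \<inter> B' = {}"
      proof (cases "f = g \<or> f' = g")
        case True
        then show ?thesis
        proof
          assume fg: "f = g"
          then have "f' \<noteq> g" using a(3) by simp
          then have f'M: "(f',B') \<in> M" using a(2) unfolding M'_def by auto
          have "B = Bn" using a(1) fg gnM unfolding M'_def by auto
          moreover have "B' \<subseteq> \<Union>(snd ` M)" using f'M by force
          then have "B' \<subseteq> U" using blocks_in by blast
          ultimately show ?thesis using BnU by blast
        next
          assume fg: "f' = g"
          then have "f \<noteq> g" using a(3) by simp
          then have fM: "(f,B) \<in> M" using a(1) unfolding M'_def by auto
          have "B' = Bn" using a(2) fg gnM unfolding M'_def by auto
          moreover have "B \<subseteq> \<Union>(snd ` M)" using fM by force
          then have "B \<subseteq> U" using blocks_in by blast
          ultimately show ?thesis using BnU by blast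
        qed
      next
        case False
        then have "(f,B) \<in> M" "(f',B') \<in> M" using a unfolding M'_def by auto
        then show ?thesis using a(3) by (rule goodD3[OF gM])
      qed
    qed
    have "M \<subseteq> M'" unfolding M'_def by auto
    moreover have "M' \<noteq> M" using gnM unfolding M'_def by auto
    ultimately show False using max gM' by auto
  qed
  have \<Lambda>iso: "|\<Lambda>| =o |S|" by (rule card_not_less_iso[OF \<Lambda>S big])
  define Bl where "Bl f = (SOME B. (f,B) \<in> M)" for f
  have BlM: "(f, Bl f) \<in> M" if "f \<in> \<Lambda>" for f
  proof -
    from that obtain B where "(f,B) \<in> M" unfolding \<Lambda>_def by force
    then show ?thesis unfolding Bl_def by (rule someI)
  qed
  have \<Lambda>X: "\<Lambda> \<subseteq> l1_space \<Gamma>" using \<Lambda>S SX by blast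
  have "\<not> linearly_dense (l1_space \<Gamma>) (l1_dist \<Gamma>) \<Lambda>"
  proof (rule obstruction[OF \<Lambda>X g0(1) \<delta>, of Bl])
    fix g assume g\<Lambda>: "g \<in> \<Lambda>"
    from goodD1[OF gM BlM[OF g\<Lambda>]] have P: "Bl g \<subseteq> {x. g x \<noteq> 0}" "Bl g \<inter> Us = {}" by auto
    have gl1: "g \<in> l1_space \<Gamma>" using g\<Lambda> \<Lambda>X by blast
    show "Bl g \<subseteq> \<Gamma> - {\<gamma>0}" using P supp_sub[OF gl1] g0(2) by blast
  next
    fix f g assume "f \<in> \<Lambda>" "g \<in> \<Lambda>" "f \<noteq> g"
    then show "Bl f \<inter> Bl g = {}" using goodD3[OF gM BlM BlM] by blast
  next
    fix g F assume g\<Lambda>: "g \<in> \<Lambda>" and F: "finite F" "F \<subseteq> \<Lambda>"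
    have gl1: "g \<in> l1_space \<Gamma>" using g\<Lambda> \<Lambda>X by blast
    from goodD1[OF gM BlM[OF g\<Lambda>]] have P1: "4 * \<delta> * mass UNIV g \<le> mass (Bl g) g"
      and P2: "mass (\<Union>(snd ` M) - Bl g) g \<le> 2 * \<delta> * mass UNIV g" by auto
    have disj: "Bl i \<inter> Bl j = {}" if "i \<in> F - {g}" "j \<in> F - {g}" "i \<noteq> j" for i j
      using goodD3[OF gM BlM BlM] that F(2) by blast
    have "(\<Sum>f\<in>F-{g}. mass (Bl f) g) = mass (\<Union>f\<in>F-{g}. Bl f) g"
      by (rule mass_UN[OF gl1, symmetric]) (use F(1) disj in auto)
    also have "\<dots> \<le> mass (\<Union>(snd ` M) - Bl g) g"
    proof (rule mass_mono[OF gl1])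
      show "(\<Union>f\<in>F-{g}. Bl f) \<subseteq> \<Union>(snd ` M) - Bl g"
      proof
        fix x assume "x \<in> (\<Union>f\<in>F-{g}. Bl f)"
        then obtain f where f: "f \<in> F - {g}" "x \<in> Bl f" by auto
        have fM: "(f, Bl f) \<in> M" using BlM f(1) F(2) by blast
        have "Bl f \<inter> Bl g = {}" using goodD3[OF gM fM BlM[OF g\<Lambda>]] f(1) by blast
        then show "x \<in> \<Union>(snd ` M) - Bl g" using fM f(2) by force
      qed
    qed
    finally have S1: "(\<Sum>f\<in>F-{g}. mass (Bl f) g) \<le> 2 * \<delta> * mass UNIV g" using P2 by linarith
    have "\<bar>g \<gamma>0\<bar> \<le> mass UNIV g" by (rule mass_point[OF gl1]) simp
    then have S2: "\<delta> * \<bar>g \<gamma>0\<bar> \<le> \<delta> * mass UNIV g" using \<delta>(1) by (simp add: mult_left_mono)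
    have "0 \<le> \<delta> * mass UNIV g" using \<delta>(1) mass_nonneg[of UNIV g] by simp
    then show "\<delta> * \<bar>g \<gamma>0\<bar> + (\<Sum>f\<in>F-{g}. mass (Bl f) g) \<le> mass (Bl g) g"
      using S1 S2 P1 by linarith
  qed
  then show ?thesis using \<Lambda>S \<Lambda>iso by blast
qed


lemma main_comb:
  fixes S :: "('a \<Rightarrow> real) set" and \<Gamma> :: "'a set"
  assumes unc: "\<not> countable \<Gamma>" and SX: "S \<subseteq> l1_space \<Gamma>" and SG: "|S| \<le>o |\<Gamma>|"
  shows "\<exists>\<Lambda>\<subseteq>S. |\<Lambda>| =o |S| \<and> \<not> linearly_dense (l1_space \<Gamma>) (l1_dist \<Gamma>) \<Lambda>"
proof (cases "|S| <o |\<Gamma>|")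
  case True
  define U where "U = (\<Union>g\<in>S. {x. g x \<noteq> 0})"
  have Ul: "|U| <o |\<Gamma>|" unfolding U_def
  proof (rule UN_countable_less[OF unc True])
    fix g assume "g \<in> S"
    then have "g \<in> l1_space \<Gamma>" using SX by blast
    then show "countable {x. g x \<noteq> 0}" by (rule supp_countable)
  qed
  have "\<not> \<Gamma> \<subseteq> U"
  proof
    assume "\<Gamma> \<subseteq> U"
    then have "|\<Gamma>| \<le>o |U|" by (rule card_of_mono1)
    then show False using Ul not_ordLess_ordLeq by blast
  qed
  then obtain \<gamma> where \<gamma>: "\<gamma> \<in> \<Gamma>" "\<gamma> \<notin> U" by blast
  have "\<not> linearly_dense (l1_space \<Gamma>) (l1_dist \<Gamma>) S"
    by (rule ZA[OF SX \<gamma>(1)]) (use \<gamma>(2) in \<open>auto simp: U_def\<close>)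
  moreover have "|S| =o |S|" by (rule card_of_refl)
  ultimately show ?thesis by blast
next
  case False
  then have SG': "|S| =o |\<Gamma>|" using SG ordLeq_iff_ordLess_or_ordIso by blast
  have GS: "|\<Gamma>| \<le>o |S|" using SG' ordIso_iff_ordLeq by blast
  have Sunc: "\<not> countable S"
  proof
    assume "countable S"
    then have "|S| \<le>o |UNIV::nat set|" using card_le_nat_iff by blast
    then have "|\<Gamma>| \<le>o |UNIV::nat set|" using GS ordLeq_transitive by blast
    then show False using unc card_le_nat_iff by blast
  qed
  have Sinf: "\<not> finite S" using Sunc countable_finite by blast
  have natS: "|UNIV::nat set| <o |S|" by (rule uncountable_nat_less[OF Sunc])
  define Z where "Z \<gamma> = {g\<in>S. g \<gamma> = 0}" for \<gamma>
  show ?thesis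
  proof (cases "\<exists>\<gamma>\<in>\<Gamma>. \<not> card_of (Z \<gamma>) <o card_of S")
    case True
    then obtain \<gamma> where \<gamma>: "\<gamma> \<in> \<Gamma>" "\<not> |Z \<gamma>| <o |S|" by blast
    have ZS: "Z \<gamma> \<subseteq> S" unfolding Z_def by blast
    have "|Z \<gamma>| =o |S|" by (rule card_not_less_iso[OF ZS \<gamma>(2)])
    moreover have "\<not> linearly_dense (l1_space \<Gamma>) (l1_dist \<Gamma>) (Z \<gamma>)"
      by (rule ZA[OF _ \<gamma>(1)]) (use SX in \<open>auto simp: Z_def\<close>)
    ultimately show ?thesis using ZS by blast
  next
    case False
    then have Zs: "\<And>\<gamma>. \<gamma> \<in> \<Gamma> \<Longrightarrow> |Z \<gamma>| <o |S|" by blast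
    have caseI: "\<not> (\<exists>N::nat \<Rightarrow> ('a \<Rightarrow> real) set. S \<subseteq> (\<Union>n. N n) \<and> (\<forall>n. card_of (N n) <o card_of S))"
    proof
      assume "\<exists>N::nat \<Rightarrow> ('a \<Rightarrow> real) set. S \<subseteq> (\<Union>n. N n) \<and> (\<forall>n. card_of (N n) <o card_of S)"
      then obtain N :: "nat \<Rightarrow> ('a \<Rightarrow> real) set" where NS: "S \<subseteq> (\<Union>n. N n)" and Nl: "\<And>n. |N n| <o |S|"
        by blast
      have "\<exists>n0. \<not> countable (N n0)"
      proof (rule ccontr)
        assume "\<not> (\<exists>n0. \<not> countable (N n0))"
        then have "countable (\<Union>n. N n)" by auto
        then have "countable S" using NS countable_subset by blast
        then show False using Sunc by blast
      qed
      then obtain n0 where n0: "\<not> countable (N n0)" by blast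
      have "|N n0| \<le>o |\<Gamma>|" using ordLess_imp_ordLeq[OF Nl[of n0]] SG ordLeq_transitive by blast
      then have "\<exists>G. G \<subseteq> \<Gamma> \<and> card_of (N n0) =o card_of G \<and> card_of G \<le>o card_of \<Gamma>" by (subst (asm) internalize_card_of_ordLeq2) simp
      then obtain G where G: "G \<subseteq> \<Gamma>" "|N n0| =o |G|" by (elim exE conjE)
      have Gunc: "\<not> countable G"
      proof
        assume "countable G"
        then have "|G| \<le>o |UNIV::nat set|" using card_le_nat_iff by blast
        moreover have "|N n0| \<le>o |G|" using G(2) ordIso_iff_ordLeq by blast
        ultimately have "|N n0| \<le>o |UNIV::nat set|" using ordLeq_transitive by blast
        then show False using n0 card_le_nat_iff by blast
      qed
      have GSl: "|G| <o |S|" using ordIso_symmetric[OF G(2)] Nl[of n0] ordIso_ordLess_trans by blast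
      have ex: "\<exists>n. card_of (Z \<gamma>) \<le>o card_of (N n)" if "\<gamma> \<in> G" for \<gamma>
      proof (rule ccontr)
        assume nex: "\<not> (\<exists>n. card_of (Z \<gamma>) \<le>o card_of (N n))"
        have Zl: "|Z \<gamma>| <o |S|" using Zs G(1) that by blast
        have NZ: "\<forall>n\<in>UNIV. card_of (N n) \<le>o card_of (Z \<gamma>)"
        proof
          fix n
          have "\<not> |Z \<gamma>| \<le>o |N n|" using nex by blast
          then have "|N n| <o |Z \<gamma>|"
            using not_ordLeq_iff_ordLess[OF card_of_Well_order card_of_Well_order] by blast
          then show "|N n| \<le>o |Z \<gamma>|" by (rule ordLess_imp_ordLeq)
        qed
        have "|S| \<le>o |\<Union>n. N n|" using NS by (rule card_of_mono1)
        also have "|\<Union>n. N n| \<le>o |SIGMA n:(UNIV::nat set). N n|" by (rule card_of_UNION_Sigma)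
        also have "|SIGMA n:(UNIV::nat set). N n| \<le>o |SIGMA n:(UNIV::nat set). Z \<gamma>|"
          by (rule card_of_Sigma_mono1[OF NZ])
        finally have "|S| \<le>o |(UNIV::nat set) \<times> Z \<gamma>|" by simp
        moreover have "|(UNIV::nat set) \<times> Z \<gamma>| <o |S|" by (rule times_less[OF Sinf natS Zl])
        ultimately have "|S| <o |S|" using ordLeq_ordLess_trans by blast
        then show False using ordLess_irreflexive by blast
      qed
      then obtain nf where nf: "\<And>\<gamma>. \<gamma> \<in> G \<Longrightarrow> |Z \<gamma>| \<le>o |N (nf \<gamma>)|" by metis
      have "\<exists>k. \<not> countable {\<gamma>\<in>G. nf \<gamma> = k}"
      proof (rule ccontr)
        assume "\<not> (\<exists>k. \<not> countable {\<gamma>\<in>G. nf \<gamma> = k})"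
        then have "countable (\<Union>k. {\<gamma>\<in>G. nf \<gamma> = k})" by auto
        moreover have "G = (\<Union>k. {\<gamma>\<in>G. nf \<gamma> = k})" by blast
        ultimately show False using Gunc by simp
      qed
      then obtain k where k: "\<not> countable {\<gamma>\<in>G. nf \<gamma> = k}" by blast
      define Gk where "Gk = {\<gamma>\<in>G. nf \<gamma> = k}"
      have cover: "S \<subseteq> (\<Union>\<gamma>\<in>Gk. Z \<gamma>)"
      proof
        fix g assume gS: "g \<in> S"
        then have "countable {x. g x \<noteq> 0}" using SX supp_countable by blast
        then have "\<not> Gk \<subseteq> {x. g x \<noteq> 0}" using k countable_subset unfolding Gk_def by blast
        then obtain \<gamma> where "\<gamma> \<in> Gk" "g \<gamma> = 0" by blast
        then show "g \<in> (\<Union>\<gamma>\<in>Gk. Z \<gamma>)" using gS unfolding Z_def by blast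
      qed
      have GkZ: "\<forall>\<gamma>\<in>Gk. card_of (Z \<gamma>) \<le>o card_of (N k)" using nf unfolding Gk_def by blast
      have "|S| \<le>o |\<Union>\<gamma>\<in>Gk. Z \<gamma>|" using cover by (rule card_of_mono1)
      also have "|\<Union>\<gamma>\<in>Gk. Z \<gamma>| \<le>o |SIGMA \<gamma>:Gk. Z \<gamma>|" by (rule card_of_UNION_Sigma)
      also have "|SIGMA \<gamma>:Gk. Z \<gamma>| \<le>o |SIGMA \<gamma>:Gk. N k|" by (rule card_of_Sigma_mono1[OF GkZ])
      finally have "|S| \<le>o |Gk \<times> N k|" by simp
      moreover have "|Gk \<times> N k| <o |S|"
      proof (rule times_less[OF Sinf _ Nl[of k]])
        show "|Gk| <o |S|" using GSl by (rule less_mono[rotated]) (auto simp: Gk_def)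
      qed
      ultimately have "|S| <o |S|" using ordLeq_ordLess_trans by blast
      then show False using ordLess_irreflexive by blast
    qed
    define R where "R = {r. \<forall>U::'a set. card_of U <o card_of S \<longrightarrow> \<not> card_of (Nset S U r) <o card_of S}"
    have R0: "0 \<in> R"
    proof -
      have "Nset S U 0 = S" for U by (auto simp: Nset_def mass_nonneg)
      then show ?thesis unfolding R_def using ordLess_irreflexive by auto
    qed
    have Rdown: "r' \<in> R" if r: "r \<in> R" and rr: "r' \<le> r" for r r'
      unfolding R_def mem_Collect_eq
    proof (intro allI impI notI)
      fix U :: "'a set" assume U: "|U| <o |S|" and less: "|Nset S U r'| <o |S|"
      have "Nset S U r \<subseteq> Nset S U r'"
      proof
        fix g assume "g \<in> Nset S U r"
        then have g: "g \<in> S" "r * mass UNIV g \<le> mass (-U) g" by (auto simp: Nset_def)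
        have "r' * mass UNIV g \<le> r * mass UNIV g" using rr mass_nonneg by (rule mult_right_mono)
        then show "g \<in> Nset S U r'" using g by (auto simp: Nset_def)
      qed
      then have "|Nset S U r| <o |S|" using less by (rule less_mono)
      then show False using r U unfolding R_def by blast
    qed
    have Rle: "r \<le> 1" if r: "r \<in> R" for r
    proof (rule ccontr)
      assume "\<not> r \<le> 1"
      then have r1: "1 < r" by simp
      have e: "|{}::'a set| <o |S|" using Sinf by (intro fin_less_inf) auto
      have "Nset S {} r \<subseteq> {(\<lambda>x. 0)}"
      proof
        fix g assume "g \<in> Nset S {} r"
        then have g: "g \<in> S" "r * mass UNIV g \<le> mass UNIV g" by (auto simp: Nset_def)
        have gl1: "g \<in> l1_space \<Gamma>" using SX g(1) by (rule subsetD)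
        have "(r - 1) * mass UNIV g \<le> 0" using g(2) by (simp add: left_diff_distrib)
        then have "mass UNIV g \<le> 0" using r1 by (auto simp: mult_le_0_iff)
        then have "\<bar>g x\<bar> \<le> 0" for x using mass_point[OF gl1, of x UNIV] by simp
        then have "g = (\<lambda>x. 0)" by (intro ext) simp
        then show "g \<in> {(\<lambda>x. 0)}" by simp
      qed
      then have "|Nset S {} r| <o |S|" using Sinf by (intro fin_less_inf) (auto intro: finite_subset)
      then show False using r e unfolding R_def by blast
    qed
    have Rne: "R \<noteq> {}" using R0 by blast
    have bdd: "bdd_above R" using Rle by (intro bdd_aboveI) 
    define m where "m = Sup R"
    have Rm: "r \<le> m" if "r \<in> R" for r unfolding m_def by (rule cSup_upper[OF that bdd])
    have m0: "0 \<le> m" using Rm R0 by blast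
    have m1: "m \<le> 1" unfolding m_def by (rule cSup_least[OF Rne Rle])
    obtain \<gamma>0 where g0: "\<gamma>0 \<in> \<Gamma>" using unc by (metis countable_empty ex_in_conv)
    show ?thesis
    proof (cases "0 < m")
      case True
      define \<delta> where "\<delta> = m / 5"
      have \<delta>: "0 < \<delta>" "\<delta> \<le> 1" using True m1 unfolding \<delta>_def by auto
      have "m - \<delta> < Sup R" using \<delta> unfolding m_def by simp
      from less_cSupD[OF Rne this] obtain r where "r \<in> R" "m - \<delta> < r" by blast
      then have mlow: "m - \<delta> \<in> R" using Rdown by auto
      have "m + \<delta> \<notin> R" using Rm \<delta> by force
      then obtain U0 where U0: "|U0| <o |S|" "|Nset S U0 (m + \<delta>)| <o |S|"
        unfolding R_def by blast
      define Us where "Us = {\<gamma>0} \<union> U0"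
      have Usl: "|Us| <o |S|" unfolding Us_def
        by (rule card_of_Un_ordLess_infinite[OF Sinf _ U0(1)]) (rule fin_less_inf[OF _ Sinf], simp)
      have "Nset S Us (m + \<delta>) \<subseteq> Nset S U0 (m + \<delta>)"
      proof
        fix g assume "g \<in> Nset S Us (m + \<delta>)"
        then have g: "g \<in> S" "(m + \<delta>) * mass UNIV g \<le> mass (-Us) g" by (auto simp: Nset_def)
        have gl1: "g \<in> l1_space \<Gamma>" using SX g(1) by (rule subsetD)
        have "mass (-Us) g \<le> mass (-U0) g" by (rule mass_mono[OF gl1]) (auto simp: Us_def)
        then show "g \<in> Nset S U0 (m + \<delta>)" using g by (auto simp: Nset_def)
      qed
      then have hUs0: "|Nset S Us (m + \<delta>)| <o |S|" using U0(2) by (rule less_mono)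
      have e4: "4 * \<delta> = m - \<delta>" and e6: "6 * \<delta> = m + \<delta>" unfolding \<delta>_def by auto
      show ?thesis
      proof (rule zorn_part[OF SX Sunc g0 _ Usl \<delta>])
        show "\<gamma>0 \<in> Us" unfolding Us_def by simp
        show "|Nset S Us (6 * \<delta>)| <o |S|" unfolding e6 by (rule hUs0)
        fix U :: "'a set" assume "|U| <o |S|"
        then show "\<not> |Nset S U (4 * \<delta>)| <o |S|" using mlow unfolding e4 R_def by blast
      qed
    next
      case False
      then have m00: "m \<le> 0" by simp
      have "\<forall>n::nat. \<exists>U::'a set. card_of U <o card_of S \<and> card_of (Nset S U (inverse (real (Suc n)))) <o card_of S"
      proof
        fix n :: nat
        have "inverse (real (Suc n)) \<notin> R"
        proof
          assume "inverse (real (Suc n)) \<in> R"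
          then have "inverse (real (Suc n)) \<le> m" by (rule Rm)
          moreover have "0 < inverse (real (Suc n))" by simp
          ultimately show False using m00 by linarith
        qed
        then show "\<exists>U::'a set. card_of U <o card_of S \<and> card_of (Nset S U (inverse (real (Suc n)))) <o card_of S"
          unfolding R_def by blast
      qed
      then obtain Uf :: "nat \<Rightarrow> 'a set" where Uf: "\<And>n. |Uf n| <o |S|"
          "\<And>n. |Nset S (Uf n) (inverse (real (Suc n)))| <o |S|" by metis
      define V where "V = (\<Union>n. Uf n)"
      have Vl: "|V| <o |S|"
      proof (rule ccontr)
        assume "\<not> |V| <o |S|"
        then have "|S| \<le>o |V|" using not_ordLess_iff_ordLeq[OF card_of_Well_order card_of_Well_order] by blast
        from this[unfolded card_of_ordLeq[symmetric]]
        obtain f where f: "inj_on f S" "f ` S \<subseteq> V" by (elim exE conjE)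
        define N where "N n = {g\<in>S. f g \<in> Uf n}" for n
        have "S \<subseteq> (\<Union>n. N n)" using f(2) unfolding N_def V_def by blast
        moreover have "|N n| <o |S|" for n
        proof -
          have "inj_on f (N n)" using f(1) unfolding N_def by (rule inj_on_subset) blast
          moreover have "f ` N n \<subseteq> Uf n" unfolding N_def by blast
          ultimately have "|N n| \<le>o |Uf n|" unfolding card_of_ordLeq[symmetric] by (intro exI conjI)
          then show ?thesis using Uf(1) ordLeq_ordLess_trans by blast
        qed
        ultimately show False using caseI by blast
      qed
      define T where "T = S - (\<Union>n. Nset S (Uf n) (inverse (real (Suc n))))"
      have Tbig: "\<not> |T| <o |S|"
      proof
        assume Tl: "|T| <o |S|"
        define N' where "N' n = (case n of 0 \<Rightarrow> T | Suc k \<Rightarrow> Nset S (Uf k) (inverse (real (Suc k))))" for n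
        have "S \<subseteq> (\<Union>n. N' n)"
        proof
          fix g assume gS: "g \<in> S"
          show "g \<in> (\<Union>n. N' n)"
          proof (cases "g \<in> T")
            case True
            then have "g \<in> N' 0" unfolding N'_def by simp
            then show ?thesis by blast
          next
            case False
            then obtain k where "g \<in> Nset S (Uf k) (inverse (real (Suc k)))" using gS unfolding T_def by blast
            then have "g \<in> N' (Suc k)" unfolding N'_def by simp
            then show ?thesis by blast
          qed
        qed
        moreover have "|N' n| <o |S|" for n using Tl Uf(2) unfolding N'_def by (cases n) auto
        ultimately show False using caseI by blast
      qed
      have Tz: "g x = 0" if gT: "g \<in> T" and xV: "x \<notin> V" for g x
      proof (rule ccontr)
        assume gx: "g x \<noteq> 0"
        have gS: "g \<in> S" using gT unfolding T_def by blast
        have gl1: "g \<in> l1_space \<Gamma>" using SX gS by (rule subsetD)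
        have a0: "0 < mass (-V) g" using mass_point[OF gl1, of x "-V"] xV gx by simp
        have aM: "mass (-V) g \<le> mass UNIV g" by (rule mass_mono[OF gl1]) simp
        then have M0: "0 < mass UNIV g" using a0 by linarith
        obtain n where n: "n > 0" "inverse (real n) < mass (-V) g / mass UNIV g"
          using ex_inverse_of_nat_less[of "mass (-V) g / mass UNIV g"] a0 M0 by auto
        then obtain k where k: "n = Suc k" using gr0_implies_Suc by blast
        have "inverse (real (Suc k)) * mass UNIV g \<le> mass (-V) g"
          using n(2) M0 unfolding k by (simp add: field_simps)
        also have "mass (-V) g \<le> mass (-Uf k) g" by (rule mass_mono[OF gl1]) (auto simp: V_def)
        finally have "g \<in> Nset S (Uf k) (inverse (real (Suc k)))" using gS by (simp add: Nset_def)
        then show False using gT unfolding T_def by blast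
      qed
      have "\<not> \<Gamma> \<subseteq> V"
      proof
        assume "\<Gamma> \<subseteq> V"
        then have "|\<Gamma>| \<le>o |V|" by (rule card_of_mono1)
        then have "|\<Gamma>| <o |S|" using Vl ordLeq_ordLess_trans by blast
        then have "|\<Gamma>| <o |\<Gamma>|" using SG ordLess_ordLeq_trans by blast
        then show False using ordLess_irreflexive by blast
      qed
      then obtain \<gamma> where \<gamma>: "\<gamma> \<in> \<Gamma>" "\<gamma> \<notin> V" by blast
      have "T \<subseteq> Z \<gamma>" using Tz \<gamma>(2) unfolding Z_def T_def by blast
      then have "\<not> |Z \<gamma>| <o |S|" using Tbig less_mono by blast
      then show ?thesis using Zs[OF \<gamma>(1)] by blast
    qed
  qed
qed


definition Lset :: "'b set \<Rightarrow> nat \<Rightarrow> 'b list set" where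
  "Lset A n = {xs. set xs \<subseteq> A \<and> length xs = n}"

lemma Lset_card:
  assumes A: "\<not> finite A"
  shows "|Lset A n| \<le>o |A|"
proof (induction n)
  case 0
  have "Lset A 0 = {[]}" by (auto simp: Lset_def)
  then have "finite (Lset A 0)" by simp
  then show ?case using fin_less_inf[OF _ A] ordLess_imp_ordLeq by blast
next
  case (Suc n)
  have e: "Lset A (Suc n) = (\<lambda>(a,xs). a # xs) ` (A \<times> Lset A n)"
  proof (rule set_eqI)
    fix ys
    show "ys \<in> Lset A (Suc n) \<longleftrightarrow> ys \<in> (\<lambda>(a,xs). a # xs) ` (A \<times> Lset A n)"
    proof
      assume "ys \<in> Lset A (Suc n)"
      then obtain a xs where "ys = a # xs" "a \<in> A" "xs \<in> Lset A n"
        unfolding Lset_def by (cases ys) auto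
      then show "ys \<in> (\<lambda>(a,xs). a # xs) ` (A \<times> Lset A n)" by force
    next
      assume "ys \<in> (\<lambda>(a,xs). a # xs) ` (A \<times> Lset A n)"
      then show "ys \<in> Lset A (Suc n)" unfolding Lset_def by auto
    qed
  qed
  have "|Lset A (Suc n)| \<le>o |A \<times> Lset A n|" unfolding e by (rule card_of_image)
  also have "|A \<times> Lset A n| \<le>o |A \<times> A|" by (rule card_of_Times_mono2[OF Suc.IH])
  also have "|A \<times> A| \<le>o |A|" using card_of_Times_same_infinite[OF A] ordIso_iff_ordLeq by blast
  finally show ?case .
qed

lemma lists_card:
  assumes A: "\<not> finite A"
  shows "|{xs. set xs \<subseteq> A}| \<le>o |A|"
proof -
  have e: "{xs. set xs \<subseteq> A} = (\<Union>n\<in>UNIV. Lset A n)" by (auto simp: Lset_def)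
  have "|UNIV::nat set| \<le>o |A|" using A infinite_iff_card_of_nat by blast
  then show ?thesis unfolding e
    by (rule card_of_UNION_ordLeq_infinite[OF A]) (use Lset_card[OF A] in blast)
qed

definition fun_of :: "('a \<times> real) list \<Rightarrow> 'a \<Rightarrow> real" where
  "fun_of xs x = sum_list (map (\<lambda>(y,r). if y = x then r else 0) xs)"

definition Dq :: "'a set \<Rightarrow> ('a \<Rightarrow> real) set" where
  "Dq \<Gamma> = fun_of ` {xs. set xs \<subseteq> \<Gamma> \<times> \<rat>}"

lemma Dq_card:
  assumes G: "\<not> finite \<Gamma>"
  shows "|Dq \<Gamma>| \<le>o |\<Gamma>|"
proof -
  have Qne: "(\<rat>::real set) \<noteq> {}" using Rats_0 by blast
  have Gne: "\<Gamma> \<noteq> {}" using G by auto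
  have inf: "\<not> finite (\<Gamma> \<times> (\<rat>::real set))"
    using G Qne Gne by (simp add: finite_cartesian_product_iff)
  have "|Dq \<Gamma>| \<le>o |{xs. set xs \<subseteq> \<Gamma> \<times> (\<rat>::real set)}|" unfolding Dq_def by (rule card_of_image)
  also have "|{xs. set xs \<subseteq> \<Gamma> \<times> (\<rat>::real set)}| \<le>o |\<Gamma> \<times> (\<rat>::real set)|" by (rule lists_card[OF inf])
  also have "|\<Gamma> \<times> (\<rat>::real set)| \<le>o |\<Gamma>|"
  proof -
    have "|(\<rat>::real set)| \<le>o |UNIV::nat set|" using countable_rat card_le_nat_iff by blast
    moreover have "|UNIV::nat set| \<le>o |\<Gamma>|" using G infinite_iff_card_of_nat by blast
    ultimately have "|(\<rat>::real set)| \<le>o |\<Gamma>|" by (rule ordLeq_transitive)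
    moreover have "(\<rat>::real set) \<noteq> {}" using Rats_0 by blast
    ultimately have "|\<Gamma> \<times> (\<rat>::real set)| =o |\<Gamma>|" using card_of_Times_infinite[OF G] by blast
    then show ?thesis using ordIso_iff_ordLeq by blast
  qed
  finally show ?thesis .
qed


lemma fun_of_map:
  assumes "distinct ys"
  shows "fun_of (map (\<lambda>y. (y, q y)) ys) x = (if x \<in> set ys then q x else 0)"
proof -
  have "fun_of (map (\<lambda>y. (y, q y)) ys) x = sum_list (map (\<lambda>y. if y = x then q y else 0) ys)"
    unfolding fun_of_def by (simp add: comp_def)
  also have "\<dots> = (\<Sum>y\<in>set ys. if y = x then q y else 0)"
    using assms by (rule sum_list_distinct_conv_sum_set)
  also have "\<dots> = (if x \<in> set ys then q x else 0)" by (simp add: sum.delta')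
  finally show ?thesis .
qed

lemma fun_of_zero:
  "(\<And>y r. (y,r) \<in> set xs \<Longrightarrow> y \<noteq> x) \<Longrightarrow> fun_of xs x = 0"
proof (induction xs)
  case Nil
  then show ?case by (simp add: fun_of_def)
next
  case (Cons p xs)
  obtain y r where p: "p = (y,r)" by (cases p)
  have e: "fun_of (p # xs) x = (if y = x then r else 0) + fun_of xs x" by (simp add: fun_of_def p)
  have "y \<noteq> x" using Cons.prems[of y r] p by simp
  moreover have "fun_of xs x = 0"
  proof (rule Cons.IH)
    fix y' r' assume "(y', r') \<in> set xs"
    then show "y' \<noteq> x" using Cons.prems[of y' r'] by simp
  qed
  ultimately show ?case using e by simp
qed

lemma fun_of_outside:
  assumes "set xs \<subseteq> \<Gamma> \<times> \<rat>" "x \<notin> \<Gamma>"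
  shows "fun_of xs x = 0"
  by (rule fun_of_zero) (use assms in auto)

lemma fun_of_supp:
  assumes "x \<notin> fst ` set xs"
  shows "fun_of xs x = 0"
  by (rule fun_of_zero) (use assms in force)

lemma Dq_sub:
  "Dq \<Gamma> \<subseteq> l1_space \<Gamma>"
proof
  fix g assume "g \<in> Dq \<Gamma>"
  then obtain xs where xs: "set xs \<subseteq> \<Gamma> \<times> \<rat>" and g: "g = fun_of xs" unfolding Dq_def by blast
  have out: "\<forall>x. x \<notin> \<Gamma> \<longrightarrow> g x = 0" using fun_of_outside[OF xs] g by blast
  have "(\<lambda>x. \<bar>g x\<bar>) summable_on (fst ` set xs)" by simp
  moreover have "(\<lambda>x. \<bar>g x\<bar>) summable_on (fst ` set xs) \<longleftrightarrow> (\<lambda>x. \<bar>g x\<bar>) summable_on \<Gamma>"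
    by (rule summable_on_cong_neutral) (use fun_of_supp fun_of_outside[OF xs] g in auto)
  ultimately have "(\<lambda>x. \<bar>g x\<bar>) summable_on \<Gamma>" by simp
  then show "g \<in> l1_space \<Gamma>" using out by (simp add: l1_space_def)
qed

lemma Dq_dense:
  "dense_wrt (l1_space \<Gamma>) (l1_dist \<Gamma>) (Dq \<Gamma>)"
  unfolding dense_wrt_def
proof (intro conjI ballI allI impI)
  show "Dq \<Gamma> \<subseteq> l1_space \<Gamma>" by (rule Dq_sub)
  fix f :: "'a \<Rightarrow> real" and e :: real assume f: "f \<in> l1_space \<Gamma>" and e: "0 < e"
  have sf: "(\<lambda>x. \<bar>f x\<bar>) summable_on \<Gamma>" by (rule l1_summable[OF f])
  obtain F where F: "finite F" "F \<subseteq> \<Gamma>" "dist (\<Sum>x\<in>F. \<bar>f x\<bar>) (infsum (\<lambda>x. \<bar>f x\<bar>) \<Gamma>) \<le> e/3"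
    using infsum_finite_approximation[OF sf, of "e/3"] e by auto
  have tail: "mass (\<Gamma> - F) f \<le> e/3"
  proof -
    have "mass \<Gamma> f = mass F f + mass (\<Gamma> - F) f"
      using mass_Un[OF f, of F "\<Gamma> - F"] F(2) by (simp add: Un_absorb1)
    moreover have "mass F f = (\<Sum>x\<in>F. \<bar>f x\<bar>)" using F(1) by (simp add: mass_def)
    moreover have "mass \<Gamma> f = infsum (\<lambda>x. \<bar>f x\<bar>) \<Gamma>" by (simp add: mass_def)
    ultimately show ?thesis using F(3) by (simp add: dist_real_def)
  qed
  define \<eta> where "\<eta> = e / (3 * (real (card F) + 1))"
  have \<eta>: "0 < \<eta>" unfolding \<eta>_def using e by simp
  have "\<forall>x. \<exists>r\<in>\<rat>. f x - \<eta> < r \<and> r < f x + \<eta>"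
    using \<eta> by (intro allI Rats_dense_in_real) simp
  then obtain q where q: "\<And>x. q x \<in> \<rat>" "\<And>x. f x - \<eta> < q x" "\<And>x. q x < f x + \<eta>" by metis
  obtain ys where ys: "set ys = F" "distinct ys" using finite_distinct_list[OF F(1)] by blast
  define xs where "xs = map (\<lambda>y. (y, q y)) ys"
  define g where "g = fun_of xs"
  have gval: "g x = (if x \<in> F then q x else 0)" for x
    unfolding g_def xs_def using fun_of_map[OF ys(2), of q x] ys(1) by simp
  have gD: "g \<in> Dq \<Gamma>"
  proof -
    have "set xs \<subseteq> \<Gamma> \<times> \<rat>" unfolding xs_def using ys(1) F(2) q(1) by auto
    then show ?thesis unfolding Dq_def g_def by blast
  qed
  have gl1: "g \<in> l1_space \<Gamma>" using gD Dq_sub by blast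
  have Dl1: "(\<lambda>x. f x - g x) \<in> l1_space \<Gamma>" by (rule l1_diff[OF f gl1])
  have d0: "l1_dist \<Gamma> f g = mass \<Gamma> (\<lambda>x. f x - g x)" unfolding l1_dist_def l1_norm_def mass_def ..
  have d1: "mass \<Gamma> (\<lambda>x. f x - g x) = mass F (\<lambda>x. f x - g x) + mass (\<Gamma> - F) (\<lambda>x. f x - g x)"
    using mass_Un[OF Dl1, of F "\<Gamma> - F"] F(2) by (simp add: Un_absorb1)
  have d2: "mass (\<Gamma> - F) (\<lambda>x. f x - g x) = mass (\<Gamma> - F) f"
    unfolding mass_def by (rule infsum_cong) (simp add: gval)
  have d3: "mass F (\<lambda>x. f x - g x) = (\<Sum>x\<in>F. \<bar>f x - q x\<bar>)"
    using F(1) by (simp add: mass_def gval)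
  have d4: "(\<Sum>x\<in>F. \<bar>f x - q x\<bar>) \<le> (\<Sum>x\<in>F. \<eta>)"
  proof (rule sum_mono)
    fix x show "\<bar>f x - q x\<bar> \<le> \<eta>" using q(2)[of x] q(3)[of x] by linarith
  qed
  have d5: "(\<Sum>x\<in>F. \<eta>) = real (card F) * \<eta>" by simp
  have d6: "real (card F) * \<eta> < e / 3"
  proof -
    have "real (card F) * \<eta> = e / 3 * (real (card F) / (real (card F) + 1))"
      unfolding \<eta>_def by (simp add: field_simps)
    also have "\<dots> < e / 3 * 1" using e by (intro mult_strict_left_mono) auto
    finally show ?thesis by simp
  qed
  have "l1_dist \<Gamma> f g < e" using d0 d1 d2 d3 d4 d5 d6 tail e by linarith
  then show "\<exists>g\<in>Dq \<Gamma>. l1_dist \<Gamma> f g < e" using gD by blast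
qed


theorem theorem3p12:
  fixes \<Gamma> :: "'a set"
  assumes "uncountable \<Gamma>"
  shows "\<not> (\<exists>S. overcomplete (l1_space \<Gamma>) (l1_dist \<Gamma>) S)"
proof
  assume "\<exists>S. overcomplete (l1_space \<Gamma>) (l1_dist \<Gamma>) S"
  then obtain S where oc: "overcomplete (l1_space \<Gamma>) (l1_dist \<Gamma>) S" by blast
  have SX: "S \<subseteq> l1_space \<Gamma>" using oc unfolding overcomplete_def by blast
  have ced: "card_eq_dens (l1_space \<Gamma>) (l1_dist \<Gamma>) S" using oc unfolding overcomplete_def by blast
  have all: "\<And>\<Lambda>. \<Lambda> \<subseteq> S \<Longrightarrow> (card_of \<Lambda>, card_of S) \<in> ordIso \<Longrightarrow> linearly_dense (l1_space \<Gamma>) (l1_dist \<Gamma>) \<Lambda>"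
    using oc unfolding overcomplete_def by blast
  have Ginf: "\<not> finite \<Gamma>" using assms countable_finite by blast
  have "(card_of S, card_of (Dq \<Gamma>)) \<in> ordLeq"
    using ced Dq_dense[of \<Gamma>] unfolding card_eq_dens_def by blast
  then have SG: "|S| \<le>o |\<Gamma>|" using Dq_card[OF Ginf] ordLeq_transitive by blast
  from main_comb[OF assms SX SG] obtain \<Lambda> where
    L: "\<Lambda> \<subseteq> S" "|\<Lambda>| =o |S|" "\<not> linearly_dense (l1_space \<Gamma>) (l1_dist \<Gamma>) \<Lambda>" by blast
  then show False using all by blast
qed

end
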